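(* Consider the $(\mu+1)$ EA with clearing (any population size $\mu$, clearing radius, niche capacity and distance function) on any fitness function on $\{0,1\}^n$. The probability that, starting from a search point $x^*$, within $\mu n/16$ generations the algorithm evolves a lineage that reaches Hamming distance at least $n/2$ to its founder $x^*$ is $2^{-\Omega(n)}$.
   Context: A lineage starting from $x^*$ is a sequence $x^*=z_0,z_1,\dots,z_k$ of individuals where each $z_{i+1}$ is created as the offspring of parent $z_i$ in some generation; it reaches Hamming distance at least $n/2$ if some $z_i$ has Hamming distance at least $n/2$ to $x^*$. The $(\mu+1)$ EA with clearing (population size $\mu$, clearing radius $\sigma$, niche capacity $\kappa$, distance function $\mathrm{d}$), for a fitness function with positive values: in generation $t$, choose a parent $x\in P_t$ uniformly at random; create $y$ by flipping each bit of $x$ independently with probability $1/n$; let $P_t^*=P_t\cup\{y\}$; update the fitness values of $P_t^*$ by the clearing procedure: sort $P_t^*$ by decreasing fitness; for $i=1,\dots,|P_t^*|$, if the current fitness of $P[i]$ is positive, set $w:=1$ and for $j=i+1,\dots,|P_t^*|$: if the current fitness of $P[j]$ is positive and $\mathrm{d}(P[i],P[j])<\sigma$ then, if $w<\kappa$ set $w:=w+1$, else set the fitness of $P[j]$ to $0$. Then choose $z\in P_t$ with worst (cleared) fitness uniformly at random; if the (cleared) fitness of $y$ is at least that of $z$, set $P_{t+1}=P_t^*\setminus\{z\}$, otherwise $P_{t+1}=P_t^*\setminus\{y\}$. *)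

theory Defs
  imports "HOL-Probability.Probability"
begin

definition hamming :: "bool list \<Rightarrow> bool list \<Rightarrow> nat" where
  "hamming x y = card {i. i < length x \<and> x ! i \<noteq> y ! i}"

primrec mutate :: "real \<Rightarrow> bool list \<Rightarrow> bool list pmf" where
  "mutate p [] = return_pmf []"
| "mutate p (b # bs) =
     bind_pmf (bernoulli_pmf p) (\<lambda>c. map_pmf (\<lambda>r. (if c then \<not> b else b) # r) (mutate p bs))"

text \<open>Inner loop of clearing for winner at sorted position i
  (xs sorted by decreasing fitness, vs current fitness values).\<close>
definition clear_inner ::
  "('a \<Rightarrow> 'a \<Rightarrow> real) \<Rightarrow> real \<Rightarrow> nat \<Rightarrow> 'a list \<Rightarrow> nat \<Rightarrow> real list \<Rightarrow> real list" where
  "clear_inner d \<sigma> \<kappa> xs i vs =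
     snd (fold (\<lambda>j (w, vs). if vs ! j > 0 \<and> d (xs ! i) (xs ! j) < \<sigma>
                            then (if w < \<kappa> then (w + 1, vs) else (w, vs[j := 0]))
                            else (w, vs))
               [Suc i..<length xs] (1::nat, vs))"

definition clear_sorted ::
  "('a \<Rightarrow> 'a \<Rightarrow> real) \<Rightarrow> real \<Rightarrow> nat \<Rightarrow> 'a list \<Rightarrow> real list \<Rightarrow> real list" where
  "clear_sorted d \<sigma> \<kappa> xs vs =
     fold (\<lambda>i vs. if vs ! i > 0 then clear_inner d \<sigma> \<kappa> xs i vs else vs) [0..<length xs] vs"

text \<open>Cleared fitness values of the individuals of a list, reported in the original order.
  Sorting by decreasing fitness is stable (ties keep list order).\<close>
definition cleared_fitness ::
  "('a \<Rightarrow> real) \<Rightarrow> ('a \<Rightarrow> 'a \<Rightarrow> real) \<Rightarrow> real \<Rightarrow> nat \<Rightarrow> 'a list \<Rightarrow> real list" where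
  "cleared_fitness f d \<sigma> \<kappa> xs =
     (let m = length xs;
          ord = sort_key (\<lambda>i. - f (xs ! i)) [0..<m];
          sx = map (\<lambda>i. xs ! i) ord;
          cv = clear_sorted d \<sigma> \<kappa> sx (map f sx)
      in fold (\<lambda>r res. res[ord ! r := cv ! r]) [0..<m] (replicate m 0))"

text \<open>State: population (each individual with a flag "descends from x*") and a flag
  recording whether a descendant of x* at Hamming distance at least n/2 from x*
  has been created so far.\<close>
type_synonym state = "(bool list \<times> bool) list \<times> bool"

definition ea_step ::
  "nat \<Rightarrow> nat \<Rightarrow> (bool list \<Rightarrow> real) \<Rightarrow> (bool list \<Rightarrow> bool list \<Rightarrow> real) \<Rightarrow> real \<Rightarrow> nat
   \<Rightarrow> bool list \<Rightarrow> state \<Rightarrow> state pmf" where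
  "ea_step n \<mu> f d \<sigma> \<kappa> xstar s = (case s of (pop, hit) \<Rightarrow>
     bind_pmf (pmf_of_set {0..<\<mu>}) (\<lambda>i.
     bind_pmf (mutate (1 / real n) (fst (pop ! i))) (\<lambda>y.
       let fl = snd (pop ! i);
           hit' = (hit \<or> (fl \<and> real (hamming y xstar) \<ge> real n / 2));
           cl = cleared_fitness f d \<sigma> \<kappa> (map fst pop @ [y]);
           W = {k. k < \<mu> \<and> cl ! k = Min ((\<lambda>k. cl ! k) ` {0..<\<mu>})}
       in map_pmf (\<lambda>z. (if cl ! z \<le> cl ! \<mu> then pop[z := (y, fl)] else pop, hit'))
                  (pmf_of_set W))))"

definition ea_run ::
  "nat \<Rightarrow> nat \<Rightarrow> (bool list \<Rightarrow> real) \<Rightarrow> (bool list \<Rightarrow> bool list \<Rightarrow> real) \<Rightarrow> real \<Rightarrow> nat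
   \<Rightarrow> bool list \<Rightarrow> nat \<Rightarrow> state \<Rightarrow> state pmf" where
  "ea_run n \<mu> f d \<sigma> \<kappa> xstar T s0 =
     ((\<lambda>p. bind_pmf p (ea_step n \<mu> f d \<sigma> \<kappa> xstar)) ^^ T) (return_pmf s0)"

definition init_state :: "bool list list \<Rightarrow> nat \<Rightarrow> state" where
  "init_state xs0 i0 = (map (\<lambda>k. (xs0 ! k, k = i0)) [0..<length xs0], False)"

end

theory Submission
  imports Defs
begin
lemma hamming_sum: "hamming x y = (\<Sum>i<length x. if x!i \<noteq> y!i then 1 else 0)"
  unfolding hamming_def by (simp add: sum.If_cases lessThan_def Collect_conj_eq Int_commute)
lemma hamming_Nil[simp]: "hamming [] y = 0" by (simp add: hamming_def)
lemma hamming_Cons[simp]: "hamming (a#as) (b#bs) = (if a \<noteq> b then 1 else 0) + hamming as bs"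
  by (simp only: hamming_sum length_Cons sum.lessThan_Suc_shift) simp
lemma hamming_self[simp]: "hamming x x = 0" by (simp add: hamming_def)
lemma length_mutate: "y \<in> set_pmf (mutate p x) \<Longrightarrow> length y = length x"
  by (induction x arbitrary: y) auto

lemma mutate_exp:
  assumes "length x = length z" "0 \<le> p" "p \<le> 1"
  shows "(\<integral>\<^sup>+y. ennreal (2^hamming y z) \<partial>mutate p x) \<le> ennreal (2^hamming x z * (1+p)^length x)"
  using assms(1)
proof (induction x arbitrary: z)
  case Nil
  then show ?case by simp
next
  case (Cons b bs)
  then obtain c cs where z: "z = c#cs" and len: "length bs = length cs" by (cases z) auto
  define M where "M = (2::real)^hamming bs cs * (1+p)^length bs"
  define g where "g = (\<lambda>b'. (2::real)^(if (if b' then \<not> b else b) \<noteq> c then 1 else 0) * M)"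
  have M0: "M \<ge> 0" using assms by (simp add: M_def)
  have inner: "(\<integral>\<^sup>+r. ennreal (2^hamming ((if b' then \<not> b else b) # r) z) \<partial>mutate p bs) \<le> ennreal (g b')" for b'
  proof -
    have "(\<integral>\<^sup>+r. ennreal (2^hamming ((if b' then \<not> b else b) # r) z) \<partial>mutate p bs)
        = (\<integral>\<^sup>+r. ennreal (2^(if (if b' then \<not> b else b) \<noteq> c then 1 else 0)) * ennreal (2^hamming r cs) \<partial>mutate p bs)"
      by (simp add: z power_add ennreal_mult)
    also have "\<dots> = ennreal (2^(if (if b' then \<not> b else b) \<noteq> c then 1 else 0)) * (\<integral>\<^sup>+r. ennreal (2^hamming r cs) \<partial>mutate p bs)"
      by (rule nn_integral_cmult) simp
    also have "\<dots> \<le> ennreal (2^(if (if b' then \<not> b else b) \<noteq> c then 1 else 0)) * ennreal M"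
      using Cons.IH[OF len] unfolding M_def by (intro mult_left_mono) auto
    also have "\<dots> = ennreal (g b')" using M0 by (simp add: g_def ennreal_mult ennreal_mult')
    finally show ?thesis .
  qed
  have "(\<integral>\<^sup>+y. ennreal (2^hamming y z) \<partial>mutate p (b#bs)) \<le> (\<integral>\<^sup>+b'. ennreal (g b') \<partial>bernoulli_pmf p)"
    by (simp add: inner nn_integral_mono)
  also have "\<dots> = ennreal (g True) * ennreal p + ennreal (g False) * ennreal (1-p)"
    using assms by simp
  also have "\<dots> = ennreal (g True * p + g False * (1-p))"
    using assms M0 by (simp add: g_def ennreal_mult ennreal_plus)
  also have "\<dots> \<le> ennreal (2^hamming (b#bs) z * (1+p)^length (b#bs))"
  proof (rule ennreal_leI)
    show "g True * p + g False * (1-p) \<le> 2^hamming (b#bs) z * (1+p)^length (b#bs)"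
      using assms M0 by (cases "b = c") (auto simp: g_def z M_def algebra_simps)
  qed
  finally show ?case .
qed

definition wt :: "bool list \<Rightarrow> bool list \<times> bool \<Rightarrow> real" where
  "wt xs v = (if snd v then 2 ^ hamming (fst v) xs else 0)"
definition phi :: "bool list \<Rightarrow> (bool list \<times> bool) list \<Rightarrow> real" where
  "phi xs pop = sum_list (map (wt xs) pop)"
definition psi :: "bool list \<Rightarrow> real \<Rightarrow> state \<Rightarrow> real" where
  "psi xs K s = phi xs (fst s) + (if snd s then K else 0)"
definition inv :: "nat \<Rightarrow> nat \<Rightarrow> state \<Rightarrow> bool" where
  "inv n \<mu> s \<longleftrightarrow> length (fst s) = \<mu> \<and> (\<forall>v\<in>set (fst s). length (fst v) = n)"

lemma wt_nonneg[simp]: "wt xs v \<ge> 0" by (simp add: wt_def)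
lemma phi_nonneg: "phi xs pop \<ge> 0" unfolding phi_def by (induction pop) (auto simp: add_nonneg_nonneg)
lemma psi_nonneg: "K \<ge> 0 \<Longrightarrow> psi xs K s \<ge> 0"
  using phi_nonneg[of xs "fst s"] by (simp add: psi_def)

lemma sum_list_upd_le: "(\<forall>x\<in>set xs. (x::real) \<ge> 0) \<Longrightarrow> a \<ge> 0 \<Longrightarrow> sum_list (xs[z := a]) \<le> sum_list xs + a"
proof (induction xs arbitrary: z)
  case Nil then show ?case by simp
next
  case (Cons x xs) then show ?case by (cases z) auto
qed

lemma phi_update: "phi xs (pop[z := v]) \<le> phi xs pop + wt xs v"
  unfolding phi_def map_update by (rule sum_list_upd_le) auto

lemma one_plus_pow_le: "n \<ge> 1 \<Longrightarrow> (1 + 1 / real n) ^ n \<le> 3"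
proof -
  assume n: "n \<ge> 1"
  have "(1 + 1 / real n) ^ n \<le> exp (1 / real n) ^ n"
    by (intro power_mono) (auto simp: add.commute exp_ge_add_one_self)
  also have "\<dots> = exp 1" using n by (simp add: exp_of_nat_mult[symmetric])
  also have "\<dots> \<le> 3" by (rule exp_le)
  finally show ?thesis .
qed

lemma step_bound:
  assumes inv: "inv n \<mu> (pop, hit)" and mu: "\<mu> \<ge> 1" and n: "n \<ge> 1" and lx: "length xs = n"
    and K0: "K \<ge> 0" and Kc: "\<And>m::nat. real m \<ge> real n / 2 \<Longrightarrow> K \<le> 2^m / 8"
  shows "(\<integral>\<^sup>+s'. ennreal (psi xs K s') \<partial>ea_step n \<mu> f d \<sigma> \<kappa> xs (pop, hit))
         \<le> ennreal ((1 + 27 / (8 * real \<mu>)) * psi xs K (pop, hit))"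
proof -
  have fin: "{0..<\<mu>} \<noteq> {}" "finite {0..<\<mu>}" using mu by auto
  define P where "P = psi xs K (pop, hit)"
  have P0: "P \<ge> 0" using K0 phi_nonneg[of xs pop] by (simp add: P_def psi_def)
  have pt: "psi xs K (if c then pop[z := (y, fl)] else pop, hit \<or> (fl \<and> real (hamming y xs) \<ge> real n / 2))
            \<le> P + 9/8 * wt xs (y, fl)" for c z y fl
  proof -
    have ph: "phi xs (if c then pop[z := (y, fl)] else pop) \<le> phi xs pop + wt xs (y, fl)"
      using phi_update[of xs pop z "(y,fl)"] by auto
    have hk: "(if hit \<or> (fl \<and> real (hamming y xs) \<ge> real n / 2) then K else 0)
              \<le> (if hit then K else 0) + 1/8 * wt xs (y, fl)"
    proof (cases "hit")
      case False
      show ?thesis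
      proof (cases "fl \<and> real (hamming y xs) \<ge> real n / 2")
        case True
        then have "K \<le> 2 ^ hamming y xs / 8" by (intro Kc) auto
        then show ?thesis using True False by (simp add: wt_def)
      qed (use False in auto)
    qed auto
    show ?thesis using ph hk by (simp add: psi_def P_def)
  qed
  have step1: "(\<integral>\<^sup>+z. ennreal (psi xs K (if c z then pop[z := (y, fl)] else pop, hit \<or> (fl \<and> real (hamming y xs) \<ge> real n / 2))) \<partial>measure_pmf W)
        \<le> ennreal (P + 9/8 * wt xs (y, fl))" for c W y fl
  proof -
    have "(\<integral>\<^sup>+z. ennreal (psi xs K (if c z then pop[z := (y, fl)] else pop, hit \<or> (fl \<and> real (hamming y xs) \<ge> real n / 2))) \<partial>measure_pmf W)
         \<le> (\<integral>\<^sup>+z. ennreal (P + 9/8 * wt xs (y, fl)) \<partial>measure_pmf W)"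
      by (intro nn_integral_mono ennreal_leI pt)
    also have "\<dots> = ennreal (P + 9/8 * wt xs (y, fl))"
      by (simp add: measure_pmf.emeasure_space_1)
    finally show ?thesis .
  qed
  have step2: "(\<integral>\<^sup>+y. ennreal (P + 9/8 * wt xs (y, snd (pop ! i))) \<partial>mutate (1 / real n) (fst (pop ! i)))
        \<le> ennreal (P + 27/8 * wt xs (pop ! i))" if i: "i < \<mu>" for i
  proof (cases "snd (pop ! i)")
    case False
    then show ?thesis by (simp add: wt_def measure_pmf.emeasure_space_1)
  next
    case True
    have li: "length (fst (pop ! i)) = length xs"
      using inv i lx by (auto simp: inv_def)
    have "(\<integral>\<^sup>+y. ennreal (P + 9/8 * wt xs (y, snd (pop ! i))) \<partial>mutate (1 / real n) (fst (pop ! i)))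
        = (\<integral>\<^sup>+y. ennreal P + ennreal (9/8) * ennreal (2 ^ hamming y xs) \<partial>mutate (1 / real n) (fst (pop ! i)))"
      using True P0 apply (intro nn_integral_cong)
      apply (subst ennreal_plus, simp_all add: wt_def)
      apply (subst ennreal_mult[symmetric], simp_all)
      done
    also have "\<dots> = ennreal P + ennreal (9/8) * (\<integral>\<^sup>+y. ennreal (2 ^ hamming y xs) \<partial>mutate (1 / real n) (fst (pop ! i)))"
      by (simp add: nn_integral_add nn_integral_cmult measure_pmf.emeasure_space_1)
    also have "\<dots> \<le> ennreal P + ennreal (9/8) * ennreal (2 ^ hamming (fst (pop ! i)) xs * (1 + 1 / real n) ^ length (fst (pop ! i)))"
      using mutate_exp[OF li, of "1 / real n"] n by (intro add_left_mono mult_left_mono) auto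
    also have "\<dots> \<le> ennreal P + ennreal (9/8) * ennreal (2 ^ hamming (fst (pop ! i)) xs * 3)"
      using one_plus_pow_le[OF n] li lx
      by (intro add_left_mono mult_left_mono ennreal_leI mult_left_mono) auto
    also have "\<dots> = ennreal (P + 9/8 * (2 ^ hamming (fst (pop ! i)) xs * 3))"
      by (subst ennreal_plus[OF P0], simp, subst ennreal_mult, simp_all)
    also have "\<dots> = ennreal (P + 27/8 * wt xs (pop ! i))"
      using True by (simp add: wt_def)
    finally show ?thesis .
  qed
  have phi_sum: "phi xs pop = (\<Sum>i\<in>{0..<\<mu>}. wt xs (pop ! i))"
    using inv unfolding phi_def inv_def by (simp add: sum_list_sum_nth)
  have phiP: "phi xs pop \<le> P" using K0 by (simp add: P_def psi_def)
  have "(\<integral>\<^sup>+s'. ennreal (psi xs K s') \<partial>ea_step n \<mu> f d \<sigma> \<kappa> xs (pop, hit))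
        \<le> (\<integral>\<^sup>+i. ennreal (P + 27/8 * wt xs (pop ! i)) \<partial>pmf_of_set {0..<\<mu>})"
    unfolding ea_step_def Let_def
    apply (simp only: nn_integral_bind_pmf nn_integral_map_pmf prod.case)
    apply (rule nn_integral_mono_AE)
    apply (rule AE_pmfI)
    apply (rule order_trans[OF nn_integral_mono[OF step1]])
    apply (rule step2)
    using fin by simp
  also have "\<dots> = (\<Sum>i\<in>{0..<\<mu>}. ennreal (P + 27/8 * wt xs (pop ! i))) / of_nat \<mu>"
    by (simp add: nn_integral_pmf_of_set[OF fin])
  also have "\<dots> = ennreal ((\<Sum>i\<in>{0..<\<mu>}. (P + 27/8 * wt xs (pop ! i))) / real \<mu>)"
    using P0 mu by (subst sum_ennreal, simp add: add_nonneg_nonneg, subst ennreal_of_nat_eq_real_of_nat,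
        subst divide_ennreal, auto intro: sum_nonneg add_nonneg_nonneg)
  also have "\<dots> \<le> ennreal ((1 + 27 / (8 * real \<mu>)) * P)"
  proof (rule ennreal_leI)
    have "(\<Sum>i\<in>{0..<\<mu>}. (P + 27/8 * wt xs (pop ! i))) = real \<mu> * P + 27/8 * phi xs pop"
      by (simp add: sum.distrib sum_distrib_left phi_sum)
    moreover have "(real \<mu> * P + 27/8 * phi xs pop) / real \<mu> \<le> (1 + 27 / (8 * real \<mu>)) * P"
      using mu phiP by (simp add: field_simps)
    ultimately show "(\<Sum>i\<in>{0..<\<mu>}. (P + 27/8 * wt xs (pop ! i))) / real \<mu> \<le> (1 + 27 / (8 * real \<mu>)) * P"
      by simp
  qed
  finally show ?thesis unfolding P_def .
qed

lemma step_bound':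
  assumes "inv n \<mu> s" "\<mu> \<ge> 1" "n \<ge> 1" "length xs = n" "K \<ge> 0"
    "\<And>m::nat. real m \<ge> real n / 2 \<Longrightarrow> K \<le> 2^m / 8"
  shows "(\<integral>\<^sup>+s'. ennreal (psi xs K s') \<partial>ea_step n \<mu> f d \<sigma> \<kappa> xs s)
         \<le> ennreal ((1 + 27 / (8 * real \<mu>)) * psi xs K s)"
  using step_bound[of n \<mu> "fst s" "snd s"] assms by simp

lemma step_inv:
  assumes "inv n \<mu> s" "\<mu> \<ge> 1" "s' \<in> set_pmf (ea_step n \<mu> f d \<sigma> \<kappa> xs s)"
  shows "inv n \<mu> s'"
proof -
  obtain pop hit where s: "s = (pop, hit)" by (cases s)
  have fin: "{0..<\<mu>} \<noteq> {}" "finite {0..<\<mu>}" using assms by auto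
  from assms(3) obtain i y z c hit' where i: "i < \<mu>" and y: "y \<in> set_pmf (mutate (1 / real n) (fst (pop ! i)))"
    and s': "s' = (if c then pop[z := (y, snd (pop ! i))] else pop, hit')"
    unfolding s ea_step_def Let_def using fin by auto
  have "length y = n" using length_mutate[OF y] assms(1) i by (auto simp: s inv_def)
  then show ?thesis using assms(1) s' set_update_subset_insert[of pop z "(y, snd (pop ! i))"]
    by (auto simp: s inv_def)
qed

lemma run_bound:
  assumes "inv n \<mu> s0" "\<mu> \<ge> 1" "n \<ge> 1" "length xs = n" "K \<ge> 0"
    "\<And>m::nat. real m \<ge> real n / 2 \<Longrightarrow> K \<le> 2^m / 8"
  shows "(\<forall>s\<in>set_pmf (ea_run n \<mu> f d \<sigma> \<kappa> xs T s0). inv n \<mu> s) \<and>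
         (\<integral>\<^sup>+s. ennreal (psi xs K s) \<partial>ea_run n \<mu> f d \<sigma> \<kappa> xs T s0)
         \<le> ennreal ((1 + 27 / (8 * real \<mu>)) ^ T * psi xs K s0)"
proof (induction T)
  case 0
  then show ?case using assms(1) by (simp add: ea_run_def)
next
  case (Suc T)
  define r where "r = 1 + 27 / (8 * real \<mu>)"
  have r0: "r \<ge> 0" by (simp add: r_def)
  have run: "ea_run n \<mu> f d \<sigma> \<kappa> xs (Suc T) s0 = bind_pmf (ea_run n \<mu> f d \<sigma> \<kappa> xs T s0) (ea_step n \<mu> f d \<sigma> \<kappa> xs)"
    by (simp add: ea_run_def)
  have I: "\<forall>s\<in>set_pmf (ea_run n \<mu> f d \<sigma> \<kappa> xs T s0). inv n \<mu> s" using Suc by blast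
  have "(\<integral>\<^sup>+s. ennreal (psi xs K s) \<partial>ea_run n \<mu> f d \<sigma> \<kappa> xs (Suc T) s0)
      = (\<integral>\<^sup>+s. (\<integral>\<^sup>+s'. ennreal (psi xs K s') \<partial>ea_step n \<mu> f d \<sigma> \<kappa> xs s) \<partial>ea_run n \<mu> f d \<sigma> \<kappa> xs T s0)"
    by (simp add: run)
  also have "\<dots> \<le> (\<integral>\<^sup>+s. ennreal r * ennreal (psi xs K s) \<partial>ea_run n \<mu> f d \<sigma> \<kappa> xs T s0)"
  proof (rule nn_integral_mono_AE, rule AE_pmfI)
    fix s assume "s \<in> set_pmf (ea_run n \<mu> f d \<sigma> \<kappa> xs T s0)"
    then have "inv n \<mu> s" using I by blast
    then have "(\<integral>\<^sup>+s'. ennreal (psi xs K s') \<partial>ea_step n \<mu> f d \<sigma> \<kappa> xs s) \<le> ennreal (r * psi xs K s)"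
      unfolding r_def using assms by (intro step_bound') auto
    also have "\<dots> = ennreal r * ennreal (psi xs K s)" using r0 psi_nonneg[OF assms(5)] by (rule ennreal_mult)
    finally show "(\<integral>\<^sup>+s'. ennreal (psi xs K s') \<partial>ea_step n \<mu> f d \<sigma> \<kappa> xs s) \<le> ennreal r * ennreal (psi xs K s)" .
  qed
  also have "\<dots> = ennreal r * (\<integral>\<^sup>+s. ennreal (psi xs K s) \<partial>ea_run n \<mu> f d \<sigma> \<kappa> xs T s0)"
    by (simp add: nn_integral_cmult)
  also have "\<dots> \<le> ennreal r * ennreal (r ^ T * psi xs K s0)"
    using Suc unfolding r_def by (intro mult_left_mono) auto
  also have "\<dots> = ennreal (r ^ Suc T * psi xs K s0)"
    using r0 psi_nonneg[OF assms(5), of xs s0] by (simp add: ennreal_mult[symmetric] mult.assoc)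
  finally have B: "(\<integral>\<^sup>+s. ennreal (psi xs K s) \<partial>ea_run n \<mu> f d \<sigma> \<kappa> xs (Suc T) s0) \<le> ennreal (r ^ Suc T * psi xs K s0)" .
  have "\<forall>s\<in>set_pmf (ea_run n \<mu> f d \<sigma> \<kappa> xs (Suc T) s0). inv n \<mu> s"
    using I step_inv[OF _ assms(2)] by (auto simp: run)
  then show ?case using B unfolding r_def by blast
qed

lemma psi_init:
  assumes "i0 < length xs0"
  shows "psi (xs0 ! i0) K (init_state xs0 i0) = 1"
proof -
  have "phi (xs0 ! i0) (map (\<lambda>k. (xs0 ! k, k = i0)) [0..<length xs0])
      = (\<Sum>k\<in>{0..<length xs0}. if k = i0 then 1 else 0)"
    unfolding phi_def map_map
    by (subst sum_set_upt_conv_sum_list_nat[symmetric]) (auto simp: wt_def intro: sum.cong)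
  also have "\<dots> = 1" using assms by simp
  finally show ?thesis by (simp add: psi_def init_state_def)
qed

lemma markov:
  assumes "K > 0" "(\<integral>\<^sup>+s. ennreal (psi xs K s) \<partial>measure_pmf M) \<le> ennreal B" "B \<ge> 0"
  shows "measure_pmf.prob M {s. snd s} \<le> B / K"
proof -
  have "ennreal K * emeasure (measure_pmf M) {s. snd s} = (\<integral>\<^sup>+s. ennreal K * indicator {s. snd s} s \<partial>measure_pmf M)"
    by (simp add: nn_integral_cmult)
  also have "\<dots> \<le> (\<integral>\<^sup>+s. ennreal (psi xs K s) \<partial>measure_pmf M)"
    using phi_nonneg assms(1) by (intro nn_integral_mono) (auto simp: psi_def indicator_def)
  also have "\<dots> \<le> ennreal B" by (rule assms(2))
  finally have "ennreal (K * measure_pmf.prob M {s. snd s}) \<le> ennreal B"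
    using assms(1) by (simp add: measure_pmf.emeasure_eq_measure ennreal_mult)
  then have "K * measure_pmf.prob M {s. snd s} \<le> B"
    using assms(3) by simp
  then show ?thesis using assms(1) by (simp add: field_simps)
qed

lemma ln2_ge: "ln (2::real) \<ge> 1/2"
proof -
  have "exp (1/2::real) ^ 2 = exp 1" by (simp add: exp_of_nat_mult[symmetric])
  also have "\<dots> \<le> 2 ^ 2" using exp_le by simp
  finally have "exp (1/2::real) \<le> 2" by (rule power2_le_imp_le) simp
  then have "ln (exp (1/2::real)) \<le> ln 2" by (subst ln_le_cancel_iff) auto
  then show ?thesis by simp
qed

lemma numeric:
  fixes n \<mu> :: nat
  assumes n: "n \<ge> 300" and mu: "\<mu> \<ge> 1"
  shows "(1 + 27 / (8 * real \<mu>)) ^ nat \<lfloor>real \<mu> * real n / 16\<rfloor> / (2 powr (real n / 2) / 8)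
         \<le> 2 powr (- (1/64) * real n)"
proof -
  define T where "T = nat \<lfloor>real \<mu> * real n / 16\<rfloor>"
  have T: "real T \<le> real \<mu> * real n / 16"
  proof -
    have x0: "0 \<le> real \<mu> * real n / 16" by simp
    have "real T = of_int \<lfloor>real \<mu> * real n / 16\<rfloor>" unfolding T_def using x0 by simp
    then show ?thesis using of_int_floor_le[of "real \<mu> * real n / 16"] by linarith
  qed
  have "(1 + 27 / (8 * real \<mu>)) ^ T \<le> exp (27 / (8 * real \<mu>)) ^ T"
    by (intro power_mono) (auto simp: add.commute exp_ge_add_one_self)
  also have "\<dots> = exp (real T * (27 / (8 * real \<mu>)))" by (rule exp_of_nat_mult[symmetric])
  also have "\<dots> \<le> exp (27 * real n / 128)"
  proof -
    have "real T * (27 / (8 * real \<mu>)) \<le> (real \<mu> * real n / 16) * (27 / (8 * real \<mu>))"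
      using T by (intro mult_right_mono) auto
    also have "\<dots> = 27 * real n / 128" using mu by (simp add: field_simps)
    finally show ?thesis by simp
  qed
  finally have A: "(1 + 27 / (8 * real \<mu>)) ^ T \<le> exp (27 * real n / 128)" .
  have B: "2 powr (real n / 2) \<ge> exp (real n / 4)"
  proof -
    have "2 powr (real n / 2) = exp (ln 2 * (real n / 2))" by (simp add: powr_def)
    moreover have "ln 2 * (real n / 2) \<ge> real n / 4"
      using mult_left_mono[OF ln2_ge, of "real n / 2"] by (simp add: mult.commute)
    ultimately show ?thesis by simp
  qed
  have "(1 + 27 / (8 * real \<mu>)) ^ T / (2 powr (real n / 2) / 8) \<le> exp (27 * real n / 128) / (exp (real n / 4) / 8)"
    using A B by (intro frac_le) auto
  also have "\<dots> = 8 * exp (- 5 * real n / 128)"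
  proof -
    have "exp (27 * real n / 128) = exp (real n / 4) * exp (- 5 * real n / 128)"
      by (subst exp_add[symmetric]) simp
    then show ?thesis by simp
  qed
  also have "\<dots> \<le> exp (- real n / 64)"
  proof -
    have "8 \<le> 1 + 3 * real n / 128" using n by simp
    also have "\<dots> \<le> exp (3 * real n / 128)" by (rule exp_ge_add_one_self)
    finally have "8 * exp (- 5 * real n / 128) \<le> exp (3 * real n / 128) * exp (- 5 * real n / 128)"
      by (intro mult_right_mono) auto
    also have "\<dots> = exp (- real n / 64)" by (simp add: exp_add[symmetric])
    finally show ?thesis .
  qed
  also have "\<dots> \<le> 2 powr (- (1/64) * real n)"
  proof -
    have "2 powr (- (1/64) * real n) = exp (- (ln 2 * real n / 64))" by (simp add: powr_def)
    moreover have "ln 2 * real n / 64 \<le> real n / 64" using mult_right_mono[of "ln 2" 1 "real n"] ln_2_less_1 by (intro divide_right_mono) auto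
    ultimately show ?thesis by simp
  qed
  finally show ?thesis unfolding T_def .
qed

theorem corollary3:
  shows "\<exists>c>0. \<exists>n0::nat. \<forall>n\<ge>n0. \<forall>(\<mu>::nat) (\<sigma>::real) (\<kappa>::nat)
           (d :: bool list \<Rightarrow> bool list \<Rightarrow> real) (f :: bool list \<Rightarrow> real)
           (xs0 :: bool list list) (i0::nat).
         \<mu> \<ge> 1 \<longrightarrow> (\<forall>x. length x = n \<longrightarrow> f x > 0) \<longrightarrow>
         length xs0 = \<mu> \<longrightarrow> (\<forall>x\<in>set xs0. length x = n) \<longrightarrow> i0 < \<mu> \<longrightarrow>
         measure_pmf.prob
           (ea_run n \<mu> f d \<sigma> \<kappa> (xs0 ! i0) (nat \<lfloor>real \<mu> * real n / 16\<rfloor>) (init_state xs0 i0))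
           {s. snd s}
         \<le> 2 powr (- c * real n)"
proof (intro exI[of _ "1/64"] conjI exI[of _ "300::nat"] allI impI)
  show "(0::real) < 1/64" by simp
  fix n \<mu> :: nat and \<sigma> :: real and \<kappa> :: nat and d :: "bool list \<Rightarrow> bool list \<Rightarrow> real"
    and f :: "bool list \<Rightarrow> real" and xs0 :: "bool list list" and i0 :: nat
  assume n: "300 \<le> n" and mu: "1 \<le> \<mu>" and "\<forall>x. length x = n \<longrightarrow> 0 < f x"
    and len: "length xs0 = \<mu>" and all: "\<forall>x\<in>set xs0. length x = n" and i0: "i0 < \<mu>"
  define K :: real where "K = 2 powr (real n / 2) / 8"
  define T where "T = nat \<lfloor>real \<mu> * real n / 16\<rfloor>"
  have K0: "K > 0" by (simp add: K_def)
  have Kc: "K \<le> 2^m / 8" if "real m \<ge> real n / 2" for m :: nat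
  proof -
    have "2 powr (real n / 2) \<le> 2 powr (real m)" using that by (intro powr_mono) auto
    then show ?thesis by (simp add: K_def powr_realpow)
  qed
  have lx: "length (xs0 ! i0) = n" using all i0 len by simp
  have inv0: "inv n \<mu> (init_state xs0 i0)"
    using all len by (auto simp: inv_def init_state_def)
  have "(\<integral>\<^sup>+s. ennreal (psi (xs0 ! i0) K s) \<partial>ea_run n \<mu> f d \<sigma> \<kappa> (xs0 ! i0) T (init_state xs0 i0))
        \<le> ennreal ((1 + 27 / (8 * real \<mu>)) ^ T * psi (xs0 ! i0) K (init_state xs0 i0))"
    using run_bound[OF inv0 mu _ lx, of K f d \<sigma> \<kappa> T] K0 Kc n by auto
  also have "psi (xs0 ! i0) K (init_state xs0 i0) = 1" using psi_init i0 len by simp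
  finally have "measure_pmf.prob (ea_run n \<mu> f d \<sigma> \<kappa> (xs0 ! i0) T (init_state xs0 i0)) {s. snd s}
       \<le> (1 + 27 / (8 * real \<mu>)) ^ T * 1 / K"
    by (intro markov K0) auto
  also have "\<dots> \<le> 2 powr (- (1/64) * real n)"
    using numeric[OF n mu] unfolding T_def K_def by simp
  finally show "measure_pmf.prob (ea_run n \<mu> f d \<sigma> \<kappa> (xs0 ! i0) (nat \<lfloor>real \<mu> * real n / 16\<rfloor>) (init_state xs0 i0)) {s. snd s}
       \<le> 2 powr (- (1/64) * real n)" unfolding T_def .
qed

end
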